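(* Let $n,m\ge 4$, $N = 2^{n-1}$, $M = 2^{m-1}$, $\alpha = 2^{n-2}-1$, $\beta = 2^{m-2}-1$, and let $G = HK$ be an exact product with $H = \langle x\rangle\rtimes\langle y\rangle\cong\mathrm{SD}_{2^n}$ ($x^N = y^2 = 1$, $x^y = x^\alpha$) and $K = \langle z\rangle \rtimes\langle w\rangle \cong \mathrm{SD}_{2^m}$ ($z^M = w^2 = 1$, $z^w = z^\beta$), such that $[x,z] = 1$, $[z,y] = x^r z^a$, $[x,w] = x^s z^b$ and $[y,w] = x^tz^c$ for some $r,s,t \in \mathbb{Z}_N$, $a,b,c\in\mathbb{Z}_M$. Let $n_1$ be a divisor of $N$ and $m_1$ a divisor of $M$. Then $\langle x^{n_1}\rangle$ is the core of $\langle x\rangle$ in $G$ if and only if $b$ has additive order exactly $n_1$ in $\mathbb{Z}_M$; and $\langle z^{m_1}\rangle$ is the core of $\langle z\rangle$ in $G$ if and only if $r$ has additive order exactly $m_1$ in $\mathbb{Z}_N$.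
   Context: Conventions: $[g,h] = g^{-1}h^{-1}gh$, $g^h = h^{-1}gh$. The core of a subgroup $X\le G$ is the largest normal subgroup of $G$ contained in $X$. An exact product $G = HK$ means $G = HK$ with $H\cap K = \{1\}$. $\mathrm{SD}_{2^n}$ denotes the semidihedral group of order $2^n$. *)

theory Defs
  imports "HOL-Algebra.Algebra"
begin

definition commutator :: "('a, 'b) monoid_scheme \<Rightarrow> 'a \<Rightarrow> 'a \<Rightarrow> 'a" where
  "commutator G g h = inv\<^bsub>G\<^esub> g \<otimes>\<^bsub>G\<^esub> inv\<^bsub>G\<^esub> h \<otimes>\<^bsub>G\<^esub> g \<otimes>\<^bsub>G\<^esub> h"

definition is_core :: "('a, 'b) monoid_scheme \<Rightarrow> 'a set \<Rightarrow> 'a set \<Rightarrow> bool" where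
  "is_core G S T \<longleftrightarrow> normal T G \<and> T \<subseteq> S \<and> (\<forall>U. normal U G \<and> U \<subseteq> S \<longrightarrow> U \<subseteq> T)"

definition add_order :: "nat \<Rightarrow> int \<Rightarrow> nat" where
  "add_order M b = (LEAST k::nat. 0 < k \<and> int M dvd int k * b)"

end

theory Submission
  imports Defs
begin

lemma (in group) cancel_aux:
  "g \<in> carrier G \<Longrightarrow> y \<in> carrier G \<Longrightarrow> g \<otimes> (inv g \<otimes> y) = y"
  by (simp add: m_assoc[symmetric])

lemma (in group) conj_pow_nat:
  assumes "g \<in> carrier G" "h \<in> carrier G"
  shows "inv g \<otimes> h [^] (n::nat) \<otimes> g = (inv g \<otimes> h \<otimes> g) [^] n"
proof (induction n)
  case 0 then show ?case using assms by simp
next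
  case (Suc n)
  have "inv g \<otimes> h [^] Suc n \<otimes> g = (inv g \<otimes> h [^] n \<otimes> g) \<otimes> (inv g \<otimes> h \<otimes> g)"
    using assms by (simp add: m_assoc cancel_aux)
  also have "\<dots> = (inv g \<otimes> h \<otimes> g) [^] Suc n" using Suc assms by simp
  finally show ?case .
qed

lemma (in group) conj_pow:
  assumes "g \<in> carrier G" "h \<in> carrier G"
  shows "inv g \<otimes> h [^] (i::int) \<otimes> g = (inv g \<otimes> h \<otimes> g) [^] i"
proof (cases i rule: int_cases2)
  case (nonneg n)
  then show ?thesis using conj_pow_nat[OF assms] by (simp add: int_pow_int)
next
  case (nonpos n)
  have "inv g \<otimes> h [^] i \<otimes> g = inv g \<otimes> inv (h [^] n) \<otimes> g"
    using nonpos assms by (simp add: int_pow_neg int_pow_int)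
  also have "\<dots> = inv (inv g \<otimes> h [^] n \<otimes> g)"
    using assms by (simp add: inv_mult_group m_assoc)
  also have "\<dots> = inv ((inv g \<otimes> h \<otimes> g) [^] n)" using conj_pow_nat[OF assms] by simp
  also have "\<dots> = (inv g \<otimes> h \<otimes> g) [^] i"
    using nonpos assms by (simp add: int_pow_neg int_pow_int)
  finally show ?thesis .
qed

lemma (in group) comm_conj:
  assumes "a \<in> carrier G" "b \<in> carrier G" "a \<otimes> b = b \<otimes> a"
  shows "inv b \<otimes> a [^] (i::int) \<otimes> b = a [^] i" "b \<otimes> a [^] (i::int) \<otimes> inv b = a [^] i"
proof -
  have "inv b \<otimes> a \<otimes> b = a" using assms by (metis inv_solve_left m_assoc m_closed inv_closed)
  then show "inv b \<otimes> a [^] (i::int) \<otimes> b = a [^] i" using conj_pow[OF assms(2,1)] by simp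
  have "b \<otimes> a \<otimes> inv b = a" using assms by (metis inv_solve_right m_assoc m_closed inv_closed)
  then show "b \<otimes> a [^] (i::int) \<otimes> inv b = a [^] i" using conj_pow[of "inv b" a i] assms by simp
qed

lemma (in group) comm_pow:
  assumes "a \<in> carrier G" "b \<in> carrier G" "a \<otimes> b = b \<otimes> a"
  shows "a [^] (i::int) \<otimes> b [^] (j::int) = b [^] j \<otimes> a [^] i"
proof -
  have "b \<otimes> a [^] i = a [^] i \<otimes> b"
    using comm_conj(1)[OF assms, of i] assms by (metis inv_solve_left m_assoc m_closed inv_closed int_pow_closed)
  then have "b [^] j \<otimes> a [^] i = a [^] i \<otimes> b [^] j"
    using comm_conj(1)[of b "a [^] i" j] assms by (metis inv_solve_left m_assoc m_closed inv_closed int_pow_closed)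
  then show ?thesis by simp
qed

lemma (in group) normal_by_gens:
  assumes S: "subgroup S G" and A: "A \<subseteq> carrier G" and gen: "carrier G \<subseteq> generate G A"
    and cj: "\<And>g h. g \<in> A \<Longrightarrow> h \<in> S \<Longrightarrow> inv g \<otimes> h \<otimes> g \<in> S \<and> g \<otimes> h \<otimes> inv g \<in> S"
  shows "S \<lhd> G"
proof -
  have Sc: "S \<subseteq> carrier G" using S subgroup.subset by blast
  define Nz where "Nz = {g \<in> carrier G. \<forall>h\<in>S. inv g \<otimes> h \<otimes> g \<in> S \<and> g \<otimes> h \<otimes> inv g \<in> S}"
  have "subgroup Nz G"
  proof (rule subgroupI)
    show "Nz \<subseteq> carrier G" unfolding Nz_def by auto
    show "Nz \<noteq> {}" unfolding Nz_def using Sc by (auto intro!: exI[of _ \<one>])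
    show "inv a \<in> Nz" if "a \<in> Nz" for a using that unfolding Nz_def by auto
    show "a \<otimes> b \<in> Nz" if "a \<in> Nz" "b \<in> Nz" for a b
    proof -
      have ac: "a \<in> carrier G" and bc: "b \<in> carrier G" using that unfolding Nz_def by auto
      { fix h assume h: "h \<in> S"
        have hc: "h \<in> carrier G" using h Sc by auto
        have "inv (a \<otimes> b) \<otimes> h \<otimes> (a \<otimes> b) = inv b \<otimes> (inv a \<otimes> h \<otimes> a) \<otimes> b"
          using ac bc hc by (simp add: inv_mult_group m_assoc)
        moreover have "inv a \<otimes> h \<otimes> a \<in> S" using that h unfolding Nz_def by auto
        ultimately have 1: "inv (a \<otimes> b) \<otimes> h \<otimes> (a \<otimes> b) \<in> S" using that unfolding Nz_def by auto
        have "(a \<otimes> b) \<otimes> h \<otimes> inv (a \<otimes> b) = a \<otimes> (b \<otimes> h \<otimes> inv b) \<otimes> inv a"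
          using ac bc hc by (simp add: inv_mult_group m_assoc)
        moreover have "b \<otimes> h \<otimes> inv b \<in> S" using that h unfolding Nz_def by auto
        ultimately have 2: "(a \<otimes> b) \<otimes> h \<otimes> inv (a \<otimes> b) \<in> S" using that unfolding Nz_def by auto
        note 1 2 }
      then show ?thesis using ac bc unfolding Nz_def by auto
    qed
  qed
  moreover have "A \<subseteq> Nz" using A cj unfolding Nz_def by auto
  ultimately have "generate G A \<subseteq> Nz" using generate_subgroup_incl by blast
  then have "carrier G \<subseteq> Nz" using gen by blast
  then show ?thesis unfolding normal_inv_iff using S unfolding Nz_def by auto
qed

lemma add_order_dvd:
  assumes "M > 0"
  shows "0 < add_order M q \<and> (int M dvd j * q \<longleftrightarrow> int (add_order M q) dvd j)"
proof -
  let ?k = "add_order M q"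
  have ex: "0 < M \<and> int M dvd int M * q" using assms by simp
  have k: "0 < ?k \<and> int M dvd int ?k * q" unfolding add_order_def by (rule LeastI[where P="\<lambda>k. 0 < k \<and> int M dvd int k * q" and k=M], rule ex)
  have "int ?k dvd j" if "int M dvd j * q"
  proof (rule ccontr)
    assume nd: "\<not> int ?k dvd j"
    have "j mod int ?k = j - int ?k * (j div int ?k)" by (simp add: minus_div_mult_eq_mod [symmetric] mult.commute)
    then have "(j mod int ?k) * q = j * q - (int ?k * q) * (j div int ?k)" by (simp add: right_diff_distrib mult.commute)
    then have d: "int M dvd (j mod int ?k) * q" using that k by (metis dvd_diff dvd_mult2)
    have pos: "0 < j mod int ?k" using nd k by (metis dvd_eq_mod_eq_0 le_less pos_mod_sign of_nat_0_less_iff)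
    have "j mod int ?k < int ?k" using k by simp
    then have lt: "nat (j mod int ?k) < ?k" using pos by linarith
    have "0 < nat (j mod int ?k) \<and> int M dvd int (nat (j mod int ?k)) * q" using pos d by simp
    then have "?k \<le> nat (j mod int ?k)" unfolding add_order_def by (rule Least_le)
    then show False using lt by simp
  qed
  moreover have "int M dvd j * q" if "int ?k dvd j" using that k by (metis dvd_mult_right dvd_trans mult_dvd_mono dvd_refl mult.assoc dvdE)
  ultimately show ?thesis using k by blast
qed

lemma (in group) gen_pow_inj:
  assumes uc: "u \<in> carrier G" and d1: "d1 dvd ord u" and d2: "d2 dvd ord u"
    and eq: "generate G {u [^] d1} = generate G {u [^] d2}"
  shows "d1 = d2"
proof -
  have key: "b dvd a" if a: "a dvd ord u" and b: "b dvd ord u"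
      and e: "generate G {u [^] a} = generate G {u [^] b}" for a b :: nat
  proof -
    have "u [^] a \<in> generate G {u [^] a}" by (rule generate.incl) simp
    then have "u [^] a \<in> {(u [^] b) [^] (j::int) | j. j \<in> UNIV}"
      using e generate_pow[of "u [^] b"] uc by simp
    then obtain j :: int where "u [^] a = (u [^] b) [^] j" by blast
    then have "u [^] (int a) = u [^] (int b * j)" using uc by (simp add: int_pow_int[symmetric] int_pow_pow)
    then have "int (ord u) dvd (int b * j - int a)" using int_pow_eq[OF uc] by simp
    moreover have "int b dvd int (ord u)" using b by simp
    ultimately have "int b dvd (int b * j - int a)" by (meson dvd_trans)
    moreover have "int a = int b * j - (int b * j - int a)" by simp
    ultimately have "int b dvd int a" by (metis dvd_diff dvd_triv_left)
    then show ?thesis by simp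
  qed
  show ?thesis using key[OF d1 d2 eq] key[OF d2 d1 eq[symmetric]] by (rule dvd_antisym[rotated])
qed

lemma (in group) core_generic:
  assumes uc: "u \<in> carrier G" and vc: "v \<in> carrier G" and gc: "g \<in> carrier G" and ec: "e \<in> carrier G"
    and uv: "u \<otimes> v = v \<otimes> u"
    and triv: "generate G {u} \<inter> generate G {v} \<subseteq> {\<one>}"
    and g2: "g \<otimes> g = \<one>" and e2: "e \<otimes> e = \<one>"
    and cg: "inv g \<otimes> u \<otimes> g = u [^] (p::int) \<otimes> v [^] (q::int)"
    and ce: "inv e \<otimes> u \<otimes> e = u [^] (cc::int)"
    and gen: "carrier G \<subseteq> generate G {u, v, g, e}"
    and Mpos: "ord v > 0"
    and d1: "n1 dvd ord u"
  shows "is_core G (generate G {u}) (generate G {u [^] n1}) \<longleftrightarrow> add_order (ord v) q = n1"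
proof -
  define k where "k = add_order (ord v) q"
  have kpos: "0 < k" and kd: "\<And>j. int (ord v) dvd j * q \<longleftrightarrow> int k dvd j"
    using add_order_dvd[OF Mpos] unfolding k_def by auto
  have ginv: "inv g = g" by (rule inv_equality[OF g2 gc gc])
  have einv: "inv e = e" by (rule inv_equality[OF e2 ec ec])
  have conjg: "inv g \<otimes> u [^] (i::int) \<otimes> g = u [^] (p*i) \<otimes> v [^] (q*i)" for i
  proof -
    have "inv g \<otimes> u [^] i \<otimes> g = (u [^] p \<otimes> v [^] q) [^] i" using conj_pow[OF gc uc] cg by simp
    also have "\<dots> = (u [^] p) [^] i \<otimes> (v [^] q) [^] i"
      by (rule int_pow_mult_distrib) (use comm_pow[OF uc vc uv] uc vc in auto)
    also have "\<dots> = u [^] (p*i) \<otimes> v [^] (q*i)" using uc vc by (simp add: int_pow_pow)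
    finally show ?thesis .
  qed
  have conje: "inv e \<otimes> u [^] (i::int) \<otimes> e = u [^] (cc*i)" for i
    using conj_pow[OF ec uc] ce uc by (simp add: int_pow_pow)
  have kN: "k dvd ord u"
  proof -
    have "u [^] (int (ord u)) = \<one>" using int_pow_eq_id[OF uc] by simp
    then have "inv g \<otimes> u [^] (int (ord u)) \<otimes> g = \<one>" using gc by simp
    then have "u [^] (p * int (ord u)) \<otimes> v [^] (q * int (ord u)) = \<one>" using conjg by simp
    moreover have "u [^] (p * int (ord u)) = \<one>" using int_pow_eq_id[OF uc] by simp
    ultimately have "v [^] (q * int (ord u)) = \<one>" using vc by simp
    then have "int (ord v) dvd int (ord u) * q" using int_pow_eq_id[OF vc] by (simp add: mult.commute)
    then show ?thesis using kd by simp
  qed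
  define S where "S = generate G {u [^] k}"
  have Smem: "h \<in> S \<longleftrightarrow> (\<exists>j. h = u [^] (int k * j))" for h
  proof -
    have "S = {(u [^] k) [^] (j::int) | j. j \<in> UNIV}" unfolding S_def using generate_pow uc by simp
    moreover have "(u [^] k) [^] (j::int) = u [^] (int k * j)" for j
      using uc by (simp add: int_pow_int[symmetric] int_pow_pow)
    ultimately show ?thesis by auto
  qed
  have Ssg: "subgroup S G" unfolding S_def using uc by (intro generate_is_subgroup) simp
  have genu: "generate G {u} = {u [^] (j::int) | j. j \<in> UNIV}" using generate_pow uc by simp
  have genv: "generate G {v} = {v [^] (j::int) | j. j \<in> UNIV}" using generate_pow vc by simp
  have Snormal: "S \<lhd> G"
  proof (rule normal_by_gens[OF Ssg _ gen])
    show "{u, v, g, e} \<subseteq> carrier G" using uc vc gc ec by auto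
    fix g' h assume g': "g' \<in> {u, v, g, e}" and h: "h \<in> S"
    then obtain j where hj: "h = u [^] (int k * j)" using Smem by blast
    have vk: "v [^] (q * (int k * j)) = \<one>"
      using int_pow_eq_id[OF vc] kd[of "int k * j"] by (simp add: mult.commute)
    show "inv g' \<otimes> h \<otimes> g' \<in> S \<and> g' \<otimes> h \<otimes> inv g' \<in> S"
    proof -
      { assume "g' = u"
        then have ?thesis using comm_conj[OF uc uc refl] h hj by simp }
      moreover
      { assume "g' = v"
        then have ?thesis using comm_conj[OF uc vc uv] h hj by simp }
      moreover
      { assume gg: "g' = g"
        have "inv g \<otimes> h \<otimes> g = u [^] (int k * (p * j))"
          using conjg[of "int k * j"] hj vk uc by (simp add: ac_simps)
        then have "inv g \<otimes> h \<otimes> g \<in> S" using Smem by blast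
        then have ?thesis using gg ginv by simp }
      moreover
      { assume gg: "g' = e"
        have "inv e \<otimes> h \<otimes> e = u [^] (int k * (cc * j))"
          using conje[of "int k * j"] hj by (simp add: ac_simps)
        then have "inv e \<otimes> h \<otimes> e \<in> S" using Smem by blast
        then have ?thesis using gg einv by simp }
      ultimately show ?thesis using g' by blast
    qed
  qed
  have Sin: "S \<subseteq> generate G {u}" using Smem genu by auto
  have Smax: "U \<subseteq> S" if U: "U \<lhd> G" "U \<subseteq> generate G {u}" for U
  proof
    fix h assume h: "h \<in> U"
    then obtain i where hi: "h = u [^] (i::int)" using U genu by blast
    have "inv g \<otimes> h \<otimes> inv (inv g) \<in> U" using U(1) h gc unfolding normal_inv_iff by (meson inv_closed)
    then have "u [^] (p*i) \<otimes> v [^] (q*i) \<in> generate G {u}" using conjg hi gc U(2) by auto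
    then obtain l where l: "u [^] (p*i) \<otimes> v [^] (q*i) = u [^] (l::int)" using genu by blast
    have "v [^] (q*i) = inv (u [^] (p*i)) \<otimes> u [^] l" using l uc vc
      by (metis int_pow_closed inv_solve_left)
    also have "\<dots> = u [^] (-(p*i) + l)" by (simp only: int_pow_mult[OF uc] int_pow_neg[OF uc])
    finally have "v [^] (q*i) \<in> generate G {u} \<inter> generate G {v}" using genu genv by blast
    then have "v [^] (q*i) = \<one>" using triv by blast
    then have "int (ord v) dvd i * q" using int_pow_eq_id[OF vc] by (simp add: mult.commute)
    then have "int k dvd i" using kd by simp
    then obtain j where "i = int k * j" by blast
    then show "h \<in> S" using Smem hi by blast
  qed
  have coreS: "is_core G (generate G {u}) S" unfolding is_core_def using Snormal Sin Smax by blast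
  have "is_core G (generate G {u}) (generate G {u [^] n1}) \<longleftrightarrow> generate G {u [^] n1} = S"
  proof
    assume c: "is_core G (generate G {u}) (generate G {u [^] n1})"
    show "generate G {u [^] n1} = S" using c coreS unfolding is_core_def by blast
  next
    assume "generate G {u [^] n1} = S" then show "is_core G (generate G {u}) (generate G {u [^] n1})"
      using coreS by simp
  qed
  also have "\<dots> \<longleftrightarrow> n1 = k"
    using gen_pow_inj[OF uc d1 kN] unfolding S_def by auto
  finally show ?thesis unfolding k_def by auto
qed

theorem lemma6p4:
  fixes G (structure)
    and x y z w :: 'a
    and n m n1 m1 :: nat
    and r s t a b c :: int
  assumes grp: "group G"
    and nm: "n \<ge> 4" "m \<ge> 4"
    and elts: "x \<in> carrier G" "y \<in> carrier G" "z \<in> carrier G" "w \<in> carrier G"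
    \<comment> \<open>H = <x> \<rtimes> <y> \<cong> SD_{2^n}\<close>
    and Hx: "group.ord G x = 2 ^ (n - 1)"
    and Hy: "y [^] (2::nat) = \<one>" "y \<notin> generate G {x}"
    and Hxy: "inv y \<otimes> x \<otimes> y = x [^] (2 ^ (n - 2) - 1 :: nat)"
    \<comment> \<open>K = <z> \<rtimes> <w> \<cong> SD_{2^m}\<close>
    and Kz: "group.ord G z = 2 ^ (m - 1)"
    and Kw: "w [^] (2::nat) = \<one>" "w \<notin> generate G {z}"
    and Kzw: "inv w \<otimes> z \<otimes> w = z [^] (2 ^ (m - 2) - 1 :: nat)"
    \<comment> \<open>exact product G = HK\<close>
    and exact: "carrier G = generate G {x, y} <#> generate G {z, w}"
               "generate G {x, y} \<inter> generate G {z, w} = {\<one>}"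
    \<comment> \<open>commutator relations\<close>
    and rng: "0 \<le> r" "r < 2 ^ (n - 1)" "0 \<le> s" "s < 2 ^ (n - 1)" "0 \<le> t" "t < 2 ^ (n - 1)"
             "0 \<le> a" "a < 2 ^ (m - 1)" "0 \<le> b" "b < 2 ^ (m - 1)" "0 \<le> c" "c < 2 ^ (m - 1)"
    and c1: "commutator G x z = \<one>"
    and c2: "commutator G z y = x [^] r \<otimes> z [^] a"
    and c3: "commutator G x w = x [^] s \<otimes> z [^] b"
    and c4: "commutator G y w = x [^] t \<otimes> z [^] c"
    and divs: "n1 dvd 2 ^ (n - 1)" "m1 dvd 2 ^ (m - 1)"
  shows "(is_core G (generate G {x}) (generate G {x [^] n1})
            \<longleftrightarrow> add_order (2 ^ (m - 1)) b = n1)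
       \<and> (is_core G (generate G {z}) (generate G {z [^] m1})
            \<longleftrightarrow> add_order (2 ^ (n - 1)) r = m1)"
proof -
  interpret group G by (rule grp)
  note xc = elts(1) and yc = elts(2) and zc = elts(3) and wc = elts(4)
  have xz: "x \<otimes> z = z \<otimes> x"
  proof -
    have "(inv x \<otimes> inv z) \<otimes> (x \<otimes> z) = \<one>" using c1 xc zc unfolding commutator_def by (simp add: m_assoc)
    then have "inv (x \<otimes> z) = inv x \<otimes> inv z" using xc zc by (intro inv_equality) auto
    then have "inv (x \<otimes> z) = inv (z \<otimes> x)" using xc zc by (simp add: inv_mult_group)
    then have "inv (inv (x \<otimes> z)) = inv (inv (z \<otimes> x))" by simp
    then show ?thesis using xc zc by (simp only: inv_inv m_closed)
  qed
  have y2: "y \<otimes> y = \<one>" using Hy(1) yc by (simp add: numeral_2_eq_2)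
  have w2: "w \<otimes> w = \<one>" using Kw(1) wc by (simp add: numeral_2_eq_2)
  have triv: "generate G {x} \<inter> generate G {z} \<subseteq> {\<one>}"
  proof -
    have "generate G {x} \<subseteq> generate G {x, y}" by (rule mono_generate) auto
    moreover have "generate G {z} \<subseteq> generate G {z, w}" by (rule mono_generate) auto
    ultimately show ?thesis using exact(2) by blast
  qed
  have gen: "carrier G \<subseteq> generate G {x, z, w, y}"
  proof
    fix g assume "g \<in> carrier G"
    then obtain h k where hk: "h \<in> generate G {x, y}" "k \<in> generate G {z, w}" "g = h \<otimes> k"
      using exact(1) unfolding set_mult_def by blast
    have "generate G {x, y} \<subseteq> generate G {x, z, w, y}" by (rule mono_generate) auto
    moreover have "generate G {z, w} \<subseteq> generate G {x, z, w, y}" by (rule mono_generate) auto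
    moreover have sg: "subgroup (generate G {x, z, w, y}) G" using elts by (intro generate_is_subgroup) auto
    ultimately have "h \<in> generate G {x, z, w, y}" "k \<in> generate G {x, z, w, y}" using hk by auto
    then show "g \<in> generate G {x, z, w, y}" using hk(3) subgroup.m_closed[OF sg] by simp
  qed
  have cw: "inv w \<otimes> x \<otimes> w = x [^] (1 + s) \<otimes> z [^] b"
  proof -
    have "inv w \<otimes> x \<otimes> w = x \<otimes> (inv x \<otimes> inv w \<otimes> x \<otimes> w)" using xc wc by (simp add: m_assoc cancel_aux)
    also have "\<dots> = x \<otimes> (x [^] s \<otimes> z [^] b)" using c3 unfolding commutator_def by simp
    also have "\<dots> = x [^] (1 + s) \<otimes> z [^] b" using xc zc by (simp add: int_pow_mult m_assoc)
    finally show ?thesis .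
  qed
  have cy: "inv y \<otimes> x \<otimes> y = x [^] (int (2 ^ (n - 2) - 1))" by (simp only: int_pow_int Hxy)
  have cy2: "inv y \<otimes> z \<otimes> y = z [^] (1 + a) \<otimes> x [^] r"
  proof -
    have "inv y \<otimes> z \<otimes> y = z \<otimes> (inv z \<otimes> inv y \<otimes> z \<otimes> y)" using zc yc by (simp add: m_assoc cancel_aux)
    also have "\<dots> = z \<otimes> (x [^] r \<otimes> z [^] a)" using c2 unfolding commutator_def by simp
    also have "\<dots> = z \<otimes> (z [^] a \<otimes> x [^] r)" using comm_pow[OF xc zc xz] by simp
    also have "\<dots> = z [^] (1 + a) \<otimes> x [^] r" using xc zc by (simp add: int_pow_mult m_assoc)
    finally show ?thesis .
  qed
  have cw2: "inv w \<otimes> z \<otimes> w = z [^] (int (2 ^ (m - 2) - 1))" by (simp only: int_pow_int Kzw)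
  have P1: "is_core G (generate G {x}) (generate G {x [^] n1}) \<longleftrightarrow> add_order (ord z) b = n1"
    by (rule core_generic[OF xc zc wc yc xz triv w2 y2 cw cy gen]) (use Kz divs Hx in auto)
  have gen2: "carrier G \<subseteq> generate G {z, x, y, w}" using gen by (simp add: insert_commute)
  have P2: "is_core G (generate G {z}) (generate G {z [^] m1}) \<longleftrightarrow> add_order (ord x) r = m1"
    by (rule core_generic[OF zc xc yc wc xz[symmetric] _ y2 w2 cy2 cw2 gen2]) (use triv Hx divs Kz in auto)
  show ?thesis using P1 P2 Hx Kz by simp
qed

end
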